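(* Assume $X_t>0$ for all $t\in\mathcal T$ and let $\alpha=\sum_tY_t/X_t$. Let $\delta_{\mathcal X}\in[0,1]$ and let $\hat F_{\mathcal X}\in\mathbb F(\boldsymbol X)$ be any strategy whose $c$-marginals satisfy, for all $c\in\mathcal C$ and $\boldsymbol u\in\mathbb R^T_{\ge0}$, $$\hat F_{\mathcal X,c}(\boldsymbol u)=1-\delta_{\mathcal X}+\delta_{\mathcal X}\min_{t\in\mathcal T}\min\Big\{\frac{\delta_{\mathcal X}}{2v_cX_t}u_t,1\Big\}.$$ Then in the weakest-link game, for every $F_{\mathcal Y}\in\mathbb F(\boldsymbol Y)$, $$\pi_{\mathcal X}(\hat F_{\mathcal X},F_{\mathcal Y})\ge\delta_{\mathcal X}\Big(1-\frac{\delta_{\mathcal X}}{2}\alpha\Big).$$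
   Context: Contests $\mathcal C=\{1,\dots,C\}$ with values $v_c>0$, $\sum_cv_c=1$; types $\mathcal T=\{1,\dots,T\}$; $\boldsymbol Y\in\mathbb R^T_{\ge0}$. $\mathbb F(\boldsymbol X)$ is the set of probability distributions $F$ on $\mathbb R^{CT}_{\ge0}$ (points $\mathbf x=(\boldsymbol x_c)_c$, $\boldsymbol x_c=(x_{c,t})_t$) with $\mathbb E_{\mathbf x\sim F}[\sum_cx_{c,t}]\le X_t$ for all $t$; similarly $\mathbb F(\boldsymbol Y)$. $c$-marginal: $F_c(\boldsymbol u)=\mathbb P_{\mathbf x\sim F}[x_{c,t}\le u_t\ \forall t]$. Weakest-link rule $W_{\mathrm{WL}}(\boldsymbol x,\boldsymbol y)=\mathbf 1\{x_t\ge y_t\ \forall t\}$; $\pi_{\mathcal X}(F_{\mathcal X},F_{\mathcal Y})=\mathbb E[\sum_cv_cW_{\mathrm{WL}}(\boldsymbol x_c,\boldsymbol y_c)]$ with independent $\mathbf x\sim F_{\mathcal X}$, $\mathbf y\sim F_{\mathcal Y}$. (A strategy with the displayed marginals: in contest $c$, with probability $1-\delta_{\mathcal X}$ allocate nothing; otherwise draw $U\sim\mathrm{Unif}[0,1]$ and allocate $x_{c,t}=\frac{2v_cX_t}{\delta_{\mathcal X}}U$ of every type $t$.) *)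

theory Defs
  imports "HOL-Probability.Probability"
begin

text \<open>Contests are indexed by a finite type 'c, resource types by a finite type 't.
A pure allocation is a point x :: real^'t^'c, with x$c$t the amount of type t in contest c.\<close>

definition strategies :: "('t::finite \<Rightarrow> real) \<Rightarrow> (real^'t^'c::finite) measure set" where
  "strategies B = {F. sets F = sets borel \<and> prob_space F \<and>
      (AE x in F. \<forall>c t. 0 \<le> x $ c $ t) \<and>
      (\<forall>t. (\<integral>\<^sup>+ x. ennreal (\<Sum>c\<in>UNIV. x $ c $ t) \<partial>F) \<le> ennreal (B t))}"

definition marginal_cdf :: "(real^'t::finite^'c::finite) measure \<Rightarrow> 'c \<Rightarrow> ('t \<Rightarrow> real) \<Rightarrow> real" where
  "marginal_cdf F c u = measure F {x \<in> space F. \<forall>t. x $ c $ t \<le> u t}"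

definition W_WL :: "real^'t::finite \<Rightarrow> real^'t \<Rightarrow> real" where
  "W_WL x y = (if \<forall>t. x $ t \<ge> y $ t then 1 else 0)"

definition payoff_X :: "('c::finite \<Rightarrow> real) \<Rightarrow> (real^'t::finite^'c) measure \<Rightarrow> (real^'t^'c) measure \<Rightarrow> real" where
  "payoff_X v FX FY = (\<integral>xy. (\<Sum>c\<in>UNIV. v c * W_WL (fst xy $ c) (snd xy $ c)) \<partial>(FX \<Otimes>\<^sub>M FY))"

end

theory Submission
  imports Defs
begin

lemma meas_comp[measurable]: "(\<lambda>x::real^'t::finite^'c::finite. x$c$t) \<in> borel_measurable borel"
  by (intro borel_measurable_continuous_onI continuous_on_component continuous_on_id)

lemma key:
  fixes M :: "(real^'t::finite^'c::finite) measure" and z :: "real^'t"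
  assumes P: "prob_space M" and S: "sets M = sets borel"
    and dpos: "0 < \<delta>" "\<delta> \<le> 1" and q: "q > 0" and X_pos: "\<forall>t. X t > 0"
    and marg: "\<forall>u. (\<forall>t. 0 \<le> u t) \<longrightarrow>
        marginal_cdf M c u = 1 - \<delta> + \<delta> * (MIN t. min (\<delta> / (2 * q * X t) * u t) 1)"
  shows "measure M {x\<in>space M. \<forall>t. z$t \<le> x$c$t} \<ge> \<delta> * (1 - (\<Sum>t\<in>UNIV. \<delta> * max (z$t) 0 / (2*q*X t)))"
proof -
  interpret prob_space M by fact
  define m where "m = (\<Sum>t\<in>UNIV. \<delta> * max (z$t) 0 / (2*q*X t))"
  define u' where "u' t = 2*q*X t/\<delta>" for t
  have u'pos: "u' t > 0" for t using X_pos dpos q by (simp add: u'_def)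
  have m0: "m \<ge> 0" unfolding m_def using X_pos dpos q by (intro sum_nonneg) (auto intro!: divide_nonneg_pos)
  have meas: "{x\<in>space M. \<forall>t. x$c$t \<le> a t} \<in> sets M" for a
  proof -
    have "Measurable.pred borel (\<lambda>x::real^'t^'c. \<forall>t. x$c$t \<le> a t)" by measurable
    then show ?thesis using S by (simp add: pred_def measurable_cong_sets sets_eq_imp_space_eq)
  qed
  show ?thesis
  proof (cases "m \<ge> 1")
    case True
    have "\<delta> * (1 - m) \<le> 0" using True dpos by (simp add: mult_nonneg_nonpos)
    then show ?thesis unfolding m_def[symmetric] using measure_nonneg[of M] by (meson order_trans)
  next
    case False
    hence m1: "m < 1" by simp
    have cdf: "measure M {x\<in>space M. \<forall>t. x$c$t \<le> a t} = 1 - \<delta> + \<delta> * (MIN t. min (\<delta> / (2 * q * X t) * a t) 1)"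
      if "\<forall>t. 0 \<le> a t" for a using marg that unfolding marginal_cdf_def by auto
    have fac: "\<delta> / (2 * q * X t) * (s * u' t) = s" for s t
      using X_pos[rule_format, of t] dpos q by (simp add: u'_def field_simps)
    define C where "C = {x\<in>space M. \<forall>t. x$c$t \<le> m * u' t}"
    define w where "w t = (\<lambda>t'. if t' = t then m * u' t else u' t')" for t
    define B where "B t = {x\<in>space M. \<forall>t'. x$c$t' \<le> w t t'}" for t
    define D where "D = {x\<in>space M. \<forall>t. x$c$t \<le> u' t}"
    have mC: "measure M C = 1 - \<delta> + \<delta> * m"
    proof -
      have "(MIN t. min (\<delta> / (2 * q * X t) * (m * u' t)) 1) = m"
        using m1 by (simp only: fac) simp
      then show ?thesis unfolding C_def using cdf[of "\<lambda>t. m * u' t"] m0 u'pos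
        by (simp add: less_imp_le)
    qed
    have mD: "measure M D = 1"
    proof -
      have "(MIN t. min (\<delta> / (2 * q * X t) * (1 * u' t)) 1) = 1"
        by (simp only: fac) simp
      then show ?thesis unfolding D_def using cdf[of "\<lambda>t. u' t"] u'pos
        by (simp add: less_imp_le)
    qed
    have mB: "measure M (B t) = 1 - \<delta> + \<delta> * m" for t
    proof -
      have "(MIN t'. min (\<delta> / (2 * q * X t') * w t t') 1) = m"
      proof (rule Min_eqI)
        show "finite (range (\<lambda>t'. min (\<delta> / (2 * q * X t') * w t t') 1))" by simp
        have ww: "\<delta> / (2 * q * X t') * w t t' = (if t' = t then m else 1)" for t'
        proof -
          have "w t t' = (if t' = t then m else 1) * u' t'" by (simp add: w_def)
          then show ?thesis by (simp only: fac)
        qed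
        show "m \<in> range (\<lambda>t'. min (\<delta> / (2 * q * X t') * w t t') 1)"
          using m1 ww[of t] by (auto intro!: image_eqI[of _ _ t])
        fix y assume "y \<in> range (\<lambda>t'. min (\<delta> / (2 * q * X t') * w t t') 1)"
        then obtain t' where "y = min (\<delta> / (2 * q * X t') * w t t') 1" by auto
        then show "m \<le> y" using m1 ww[of t'] by auto
      qed
      moreover have "\<forall>t'. 0 \<le> w t t'" using u'pos m0 by (simp add: w_def less_imp_le)
      ultimately show ?thesis unfolding B_def using cdf[of "w t"] by simp
    qed
    have CB: "C \<subseteq> B t" for t
      unfolding C_def B_def w_def using m1 u'pos
      by auto (smt (verit, best) mult_le_cancel_right1)
    have Bnull: "measure M (B t - C) = 0" for t
      using finite_measure_Diff[of "B t" C] CB[of t] mB mC meas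
      unfolding B_def C_def by auto
    have zle: "z$t \<le> m * u' t" for t
    proof -
      have "\<delta> * max (z$t) 0 / (2*q*X t) \<le> m" unfolding m_def
        using X_pos dpos q by (intro member_le_sum) (auto intro!: divide_nonneg_pos)
      hence "\<delta> * max (z$t) 0 / (2*q*X t) * u' t \<le> m * u' t"
        using u'pos[of t] by (intro mult_right_mono) (auto simp del: times_divide_eq_left)
      moreover have "\<delta> * max (z$t) 0 / (2*q*X t) * u' t = max (z$t) 0"
        using X_pos[rule_format, of t] dpos q by (simp add: u'_def field_simps)
      ultimately show ?thesis by simp
    qed
    define A where "A = {x\<in>space M. \<not> (\<forall>t. z$t \<le> x$c$t)}"
    have AS: "A \<subseteq> C \<union> (\<Union>t. B t - C) \<union> (space M - D)"
    proof
      fix x assume "x \<in> A"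
      then have xs: "x \<in> space M" and "\<exists>t. x$c$t < z$t" unfolding A_def by (auto simp: not_le)
      then obtain t where "x$c$t < z$t" by blast
      hence xt: "x$c$t \<le> m * u' t" using zle[of t] by simp
      show "x \<in> C \<union> (\<Union>t. B t - C) \<union> (space M - D)"
      proof (cases "x \<in> D")
        case True
        hence "x \<in> B t" using xt xs unfolding D_def B_def w_def by auto
        then show ?thesis by auto
      qed (use xs in auto)
    qed
    have Ameas: "A \<in> sets M"
    proof -
      have "Measurable.pred borel (\<lambda>x::real^'t^'c. \<not> (\<forall>t. z$t \<le> x$c$t))" by measurable
      then show ?thesis using S unfolding A_def by (simp add: pred_def measurable_cong_sets sets_eq_imp_space_eq)
    qed
    have "measure M A \<le> measure M (C \<union> (\<Union>t. B t - C) \<union> (space M - D))"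
      using AS meas unfolding B_def C_def D_def
      by (intro finite_measure_mono) auto
    also have "\<dots> \<le> measure M C + measure M (\<Union>t. B t - C) + measure M (space M - D)"
      by (intro order_trans[OF measure_Un_le] add_mono order_refl measure_Un_le sets.Un sets.Diff sets.countable_UN)
         (use meas in \<open>auto simp: B_def C_def D_def\<close>)
    also have "measure M (\<Union>t. B t - C) \<le> (\<Sum>t\<in>UNIV. measure M (B t - C))"
      by (rule finite_measure_subadditive_finite) (use meas in \<open>auto simp: B_def C_def\<close>)
    also have "measure M (space M - D) = 0"
      using prob_compl[of D] mD meas unfolding D_def by simp
    finally have "measure M A \<le> 1 - \<delta> + \<delta> * m" using Bnull mC by simp
    moreover have "measure M {x\<in>space M. \<forall>t. z$t \<le> x$c$t} = 1 - measure M A"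
    proof -
      have "{x\<in>space M. \<forall>t. z$t \<le> x$c$t} = space M - A" unfolding A_def by auto
      then show ?thesis using prob_compl[OF Ameas] by simp
    qed
    ultimately show ?thesis unfolding m_def[symmetric] by (simp add: algebra_simps)
  qed
qed


theorem lemma5:
  fixes v :: "'c::finite \<Rightarrow> real"
    and X Y :: "'t::finite \<Rightarrow> real"
    and \<delta> :: real
    and FX :: "(real^'t^'c) measure"
  assumes v_pos: "\<forall>c. v c > 0"
    and v_sum: "(\<Sum>c\<in>UNIV. v c) = 1"
    and X_pos: "\<forall>t. X t > 0"
    and Y_nonneg: "\<forall>t. Y t \<ge> 0"
    and delta: "0 \<le> \<delta>" "\<delta> \<le> 1"
    and FX_strat: "FX \<in> strategies X"
    and FX_marg: "\<forall>c u. (\<forall>t. 0 \<le> u t) \<longrightarrow>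
        marginal_cdf FX c u = 1 - \<delta> + \<delta> * (MIN t. min (\<delta> / (2 * v c * X t) * u t) 1)"
  shows "\<forall>FY \<in> strategies Y.
     payoff_X v FX FY \<ge> \<delta> * (1 - \<delta> / 2 * (\<Sum>t\<in>UNIV. Y t / X t))"
proof
  fix FY :: "(real^'t^'c) measure" assume FY: "FY \<in> strategies Y"
  have PX: "prob_space FX" and SX: "sets FX = sets borel"
    using FX_strat unfolding strategies_def by auto
  have PY: "prob_space FY" and SY: "sets FY = sets borel"
    and AEY: "AE y in FY. \<forall>c t. 0 \<le> y $ c $ t"
    and NY: "\<And>t. (\<integral>\<^sup>+ y. ennreal (\<Sum>c\<in>UNIV. y $ c $ t) \<partial>FY) \<le> ennreal (Y t)"
    using FY unfolding strategies_def by auto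
  interpret X: prob_space FX by fact
  interpret Y: prob_space FY by fact
  interpret XY: pair_prob_space FX FY by unfold_locales
  define f where "f x y = (\<Sum>c\<in>UNIV. v c * W_WL (x$c) (y$c))" for x y :: "real^'t^'c"
  have spX: "space FX = UNIV" using sets_eq_imp_space_eq[OF SX] by simp
  have spY: "space FY = UNIV" using sets_eq_imp_space_eq[OF SY] by simp
  have pay: "payoff_X v FX FY = integral\<^sup>L (FX \<Otimes>\<^sub>M FY) (case_prod f)"
    unfolding payoff_X_def f_def by (simp add: case_prod_beta')
  have f_nonneg: "0 \<le> f x y" for x y
    unfolding f_def W_WL_def using v_pos by (intro sum_nonneg) (auto simp: less_imp_le)
  show "payoff_X v FX FY \<ge> \<delta> * (1 - \<delta> / 2 * (\<Sum>t\<in>UNIV. Y t / X t))"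
  proof (cases "\<delta> = 0")
    case True
    then show ?thesis unfolding pay using f_nonneg by (auto intro!: integral_nonneg split: prod.split)
  next
    case False
    hence dpos: "\<delta> > 0" using delta by simp
    have Sprod: "sets (FX \<Otimes>\<^sub>M FY) = sets (borel \<Otimes>\<^sub>M borel)"
      by (intro sets_pair_measure_cong SX SY)
    have fmeas: "case_prod f \<in> borel_measurable (borel \<Otimes>\<^sub>M borel)"
      unfolding f_def W_WL_def by measurable
    have fint: "integrable (FX \<Otimes>\<^sub>M FY) (case_prod f)"
    proof (rule XY.P.integrable_const_bound[where B=1])
      show "case_prod f \<in> borel_measurable (FX \<Otimes>\<^sub>M FY)"
        using fmeas by (simp add: measurable_cong_sets[OF Sprod refl])
      have "f x y \<le> 1" for x y
      proof -
        have "f x y \<le> (\<Sum>c\<in>UNIV. v c)" unfolding f_def W_WL_def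
          using v_pos by (intro sum_mono) (auto simp: less_imp_le)
        then show ?thesis using v_sum by simp
      qed
      then show "AE xy in FX \<Otimes>\<^sub>M FY. norm (case_prod f xy) \<le> 1"
        using f_nonneg by auto
    qed
    define g where "g t y = (\<Sum>c\<in>UNIV. max (y$c$t) 0)" for t and y :: "real^'t^'c"
    have gmeas: "g t \<in> borel_measurable FY" for t
    proof -
      have "g t \<in> borel_measurable borel" unfolding g_def by measurable
      then show ?thesis by (simp add: measurable_cong_sets[OF SY refl])
    qed
    have gnn: "(\<integral>\<^sup>+ y. ennreal (g t y) \<partial>FY) \<le> ennreal (Y t)" for t
    proof -
      have "(\<integral>\<^sup>+ y. ennreal (g t y) \<partial>FY) = (\<integral>\<^sup>+ y. ennreal (\<Sum>c\<in>UNIV. y $ c $ t) \<partial>FY)"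
        by (rule nn_integral_cong_AE) (use AEY in \<open>auto simp: g_def\<close>)
      then show ?thesis using NY[of t] by simp
    qed
    have gint: "integrable FY (g t)" for t
      by (rule integrableI_nonneg[OF gmeas]) (use gnn[of t] in \<open>auto simp: g_def intro!: sum_nonneg le_less_trans[OF _ ennreal_less_top]\<close>)
    have gle: "integral\<^sup>L FY (g t) \<le> Y t" for t
    proof -
      have "ennreal (integral\<^sup>L FY (g t)) \<le> ennreal (Y t)"
        using nn_integral_eq_integral[OF gint[of t]] gnn[of t] by (simp add: g_def sum_nonneg)
      then show ?thesis using Y_nonneg by (simp add: ennreal_le_iff)
    qed
    define h where "h y = \<delta> - \<delta>^2 / 2 * (\<Sum>t\<in>UNIV. g t y / X t)" for y
    have inner: "(\<integral>x. f x y \<partial>FX) \<ge> h y" for y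
    proof -
      have Wi: "(\<integral>x. W_WL (x$c) (y$c) \<partial>FX) = measure FX {x\<in>space FX. \<forall>t. y$c$t \<le> x$c$t}" for c
      proof -
        have "(\<lambda>x. W_WL (x$c) (y$c)) = indicator {x. \<forall>t. y$c$t \<le> x$c$t}"
          by (auto simp: W_WL_def indicator_def vec_nth_inject fun_eq_iff)
        then show ?thesis by (simp add: spX)
      qed
      have "(\<integral>x. f x y \<partial>FX) = (\<Sum>c\<in>UNIV. v c * measure FX {x\<in>space FX. \<forall>t. y$c$t \<le> x$c$t})"
      proof -
        have Wint: "integrable FX (\<lambda>x. v c * W_WL (x$c) (y$c))" for c
        proof (intro integrable_mult_right X.integrable_const_bound[where B=1])
          have "(\<lambda>x::real^'t^'c. W_WL (x$c) (y$c)) \<in> borel_measurable borel"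
            unfolding W_WL_def by measurable
          then show "(\<lambda>x. W_WL (x$c) (y$c)) \<in> borel_measurable FX"
            by (simp add: measurable_cong_sets[OF SX refl])
        qed (auto simp: W_WL_def)
        have "(\<integral>x. (\<Sum>c\<in>UNIV. v c * W_WL (x$c) (y$c)) \<partial>FX) = (\<Sum>c\<in>UNIV. (\<integral>x. v c * W_WL (x$c) (y$c) \<partial>FX))"
          by (rule Bochner_Integration.integral_sum[where f="\<lambda>c x. v c * W_WL (x$c) (y$c)"]) (use Wint in auto)
        then show ?thesis unfolding f_def by (simp add: Wi)
      qed
      also have "\<dots> \<ge> (\<Sum>c\<in>UNIV. v c * (\<delta> * (1 - (\<Sum>t\<in>UNIV. \<delta> * max (y$c$t) 0 / (2 * v c * X t)))))"
      proof (intro sum_mono mult_left_mono)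
        fix c
        show "\<delta> * (1 - (\<Sum>t\<in>UNIV. \<delta> * max (y$c$t) 0 / (2 * v c * X t))) \<le> measure FX {x\<in>space FX. \<forall>t. y$c$t \<le> x$c$t}"
          using key[OF PX SX dpos delta(2), of "v c" X c "y$c"] v_pos X_pos FX_marg by auto
        show "0 \<le> v c" using v_pos by (simp add: less_imp_le)
      qed
      also have "(\<Sum>c\<in>UNIV. v c * (\<delta> * (1 - (\<Sum>t\<in>UNIV. \<delta> * max (y$c$t) 0 / (2 * v c * X t)))))
           = h y"
      proof -
        have "v c * (\<delta> * (1 - (\<Sum>t\<in>UNIV. \<delta> * max (y$c$t) 0 / (2 * v c * X t))))
            = \<delta> * v c - \<delta>^2 / 2 * (\<Sum>t\<in>UNIV. max (y$c$t) 0 / X t)" for c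
          using v_pos[rule_format, of c]
          by (simp add: algebra_simps sum_distrib_left power2_eq_square)
        hence "(\<Sum>c\<in>UNIV. v c * (\<delta> * (1 - (\<Sum>t\<in>UNIV. \<delta> * max (y$c$t) 0 / (2 * v c * X t)))))
            = \<delta> * (\<Sum>c\<in>UNIV. v c) - \<delta>^2 / 2 * (\<Sum>c\<in>UNIV. \<Sum>t\<in>UNIV. max (y$c$t) 0 / X t)"
          by (simp add: sum_subtractf sum_distrib_left)
        also have "(\<Sum>c\<in>UNIV. \<Sum>t\<in>UNIV. max (y$c$t) 0 / X t) = (\<Sum>t\<in>UNIV. g t y / X t)"
          unfolding g_def by (subst sum.swap) (simp add: sum_divide_distrib)
        finally show ?thesis using v_sum by (simp add: h_def)
      qed
      finally show ?thesis .
    qed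
    have hint: "integrable FY h"
      unfolding h_def using gint by auto
    have "integral\<^sup>L FY h \<le> (\<integral>y. (\<integral>x. f x y \<partial>FX) \<partial>FY)"
      by (rule integral_mono[OF hint XY.integrable_snd[OF fint] inner])
    also have "\<dots> = payoff_X v FX FY" using XY.integral_snd[OF fint] pay by simp
    finally have 1: "integral\<^sup>L FY h \<le> payoff_X v FX FY" .
    have "integral\<^sup>L FY h = \<delta> - \<delta>^2 / 2 * (\<Sum>t\<in>UNIV. integral\<^sup>L FY (g t) / X t)"
      unfolding h_def using gint by (simp add: Y.prob_space)
    also have "\<dots> \<ge> \<delta> - \<delta>^2 / 2 * (\<Sum>t\<in>UNIV. Y t / X t)"
    proof -
      have "(\<Sum>t\<in>UNIV. integral\<^sup>L FY (g t) / X t) \<le> (\<Sum>t\<in>UNIV. Y t / X t)"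
        using gle X_pos by (intro sum_mono divide_right_mono) (auto simp: less_imp_le)
      then show ?thesis by (intro diff_left_mono mult_left_mono) auto
    qed
    finally show ?thesis using 1 by (simp add: algebra_simps power2_eq_square)
  qed
qed

end
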